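(* Let $k>t+1$, $n>2k-t$, and let $\mathcal{S}_a$ be a maximal set of $k$-spaces in $\mathrm{AG}(n,q)$ pairwise intersecting in at least a $t$-space. Let $\psi(\mathcal{S}_a)=\min\{\dim T: T\text{ an affine subspace},\ \dim(T\cap\alpha)\geq t\ \forall\alpha\in\mathcal{S}_a\}$ and suppose $\psi(\mathcal{S}_a)=t+x$ with $x\geq 2$. Then for each $j\in\{0,1,\dots,x\}$, the number of elements of $\mathcal{S}_a$ containing any given affine $(t+x-j)$-space is at most $(\theta_{k-t})^j\left[{n-t-x\atop k-t-x}\right]_q$.
   Context: Affine subspaces intersect in at least a $t$-space if their affine intersection has dimension at least $t$. $\left[{n\atop k}\right]_q=\frac{(q^n-1)\cdots(q^{n-k+1}-1)}{(q^k-1)\cdots(q-1)}$ for $k>0$, $=1$ for $k=0$; $\theta_m=\frac{q^{m+1}-1}{q-1}$. Maximal means no further affine $k$-space can be added keeping the property. *)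

theory Defs
  imports "HOL-Analysis.Analysis"
begin

text \<open>AG(n,q) is modelled as the vector space 'a^'n over a finite field 'a,
  with q = CARD('a) and n = CARD('n).\<close>

definition affine_sub :: "('a::field ^ 'n) set \<Rightarrow> bool" where
  "affine_sub S \<longleftrightarrow> (\<exists>p W. vec.subspace W \<and> S = (\<lambda>w. p + w) ` W)"

definition direction :: "('a::field ^ 'n) set \<Rightarrow> ('a ^ 'n) set" where
  "direction S = {x - y | x y. x \<in> S \<and> y \<in> S}"

definition adim :: "('a::field ^ 'n) set \<Rightarrow> nat" where
  "adim S = vec.dim (direction S)"

definition meets_in :: "nat \<Rightarrow> ('a::field ^ 'n) set \<Rightarrow> ('a ^ 'n) set \<Rightarrow> bool" where
  "meets_in t A B \<longleftrightarrow> A \<inter> B \<noteq> {} \<and> adim (A \<inter> B) \<ge> t"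

definition kspace :: "nat \<Rightarrow> ('a::field ^ 'n) set \<Rightarrow> bool" where
  "kspace k S \<longleftrightarrow> affine_sub S \<and> adim S = k"

definition maximal_t_intersecting :: "nat \<Rightarrow> nat \<Rightarrow> ('a::field ^ 'n) set set \<Rightarrow> bool" where
  "maximal_t_intersecting k t F \<longleftrightarrow>
     (\<forall>A\<in>F. kspace k A) \<and>
     (\<forall>A\<in>F. \<forall>B\<in>F. meets_in t A B) \<and>
     (\<forall>B. kspace k B \<and> B \<notin> F \<longrightarrow> \<not> (\<forall>A\<in>F. meets_in t A B))"

definition psi :: "nat \<Rightarrow> ('a::field ^ 'n) set set \<Rightarrow> nat" where
  "psi t F = (LEAST d. \<exists>T. affine_sub T \<and> adim T = d \<and> (\<forall>A\<in>F. meets_in t T A))"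

definition qbinom :: "nat \<Rightarrow> nat \<Rightarrow> nat \<Rightarrow> real" where
  "qbinom q n k = (if k = 0 then 1 else
     (\<Prod>i<k. (real q ^ (n - i) - 1)) / (\<Prod>i<k. (real q ^ (i + 1) - 1)))"

definition theta :: "nat \<Rightarrow> nat \<Rightarrow> real" where
  "theta q m = (real q ^ (m + 1) - 1) / (real q - 1)"

end

theory Submission
  imports Defs
begin


definition gb :: "nat \<Rightarrow> nat \<Rightarrow> nat \<Rightarrow> real" where
  "gb q a g = (\<Prod>i<g. (real q ^ (a - i) - 1) / (real q ^ (g - i) - 1))"

lemma pow_gt1: "2 \<le> q \<Longrightarrow> 0 < r \<Longrightarrow> (1::real) < real q ^ r"
  by (metis Suc_1 less_eq_Suc_le of_nat_1 of_nat_less_iff of_nat_power one_less_power)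

lemma gb_pos: "2 \<le> q \<Longrightarrow> g \<le> a \<Longrightarrow> 0 < gb q a g"
  unfolding gb_def
  by (rule prod_pos) (auto intro!: divide_pos_pos simp: pow_gt1)

lemma theta_pos: "2 \<le> q \<Longrightarrow> 0 < theta q c"
  unfolding theta_def using pow_gt1[of q "c+1"] by (auto intro!: divide_pos_pos)

lemma theta_mono: "2 \<le> q \<Longrightarrow> c \<le> c' \<Longrightarrow> theta q c \<le> theta q c'"
  unfolding theta_def
  by (rule divide_right_mono) (auto intro!: power_increasing)

lemma theta_le: "2 \<le> q \<Longrightarrow> theta q c \<le> real q ^ (c+1)"
proof -
  assume q: "2 \<le> q"
  have "theta q c * (real q - 1) = real q ^ (c+1) - 1" unfolding theta_def using q by simp
  moreover have "real q ^ (c+1) - 1 \<le> real q ^ (c+1) * (real q - 1)"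
  proof -
    have "1 \<le> real q - 1" using q by simp
    hence "real q ^ (c+1) * 1 \<le> real q ^ (c+1) * (real q - 1)" by (intro mult_left_mono) auto
    thus ?thesis by simp
  qed
  ultimately have "theta q c * (real q - 1) \<le> real q ^ (c+1) * (real q - 1)" by simp
  thus ?thesis using q by simp
qed

lemma factor_le:
  assumes q: "2 \<le> q" and r: "1 \<le> r"
  shows "(real q ^ (b + r) - 1) / (real q ^ r - 1) \<le> theta q b"
proof -
  define X where "X = real q ^ b"
  define Y where "Y = real q ^ r"
  have X1: "1 \<le> X" unfolding X_def using q by simp
  have Yq: "real q \<le> Y" unfolding Y_def using q r
    by (metis One_nat_def of_nat_0_le_iff of_nat_1 of_nat_le_iff one_le_numeral order_trans power_increasing power_one_right)
  have Y1: "1 < Y" using Yq q by simp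
  have q1: "1 < real q" using q by simp
  have "0 \<le> (X - 1) * (Y - real q)" using X1 Yq by simp
  hence ineq: "(X * Y - 1) * (real q - 1) \<le> (X * real q - 1) * (Y - 1)"
    by (simp add: algebra_simps)
  have e1: "real q ^ (b + r) = X * Y" unfolding X_def Y_def by (simp add: power_add)
  have e2: "real q ^ (b + 1) = X * real q" unfolding X_def by simp
  have "(X * Y - 1) / (Y - 1) \<le> (X * real q - 1) / (real q - 1)"
    using ineq Y1 q1 by (simp add: field_simps)
  thus ?thesis unfolding theta_def Y_def[symmetric] e1 e2 .
qed

lemma gb_le_theta:
  assumes q: "2 \<le> q" and ga: "g \<le> a"
  shows "gb q a g \<le> theta q (a - g) ^ g"
proof -
  have "gb q a g \<le> (\<Prod>i<g. theta q (a - g))"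
    unfolding gb_def
  proof (rule prod_mono, intro conjI)
    fix i assume i: "i \<in> {..<g}"
    have ig: "i < g" using i by simp
    have d1: "1 < real q ^ (g - i)" using pow_gt1[OF q, of "g - i"] ig by simp
    have n1: "1 \<le> real q ^ (a - i)" using q by simp
    show "0 \<le> (real q ^ (a - i) - 1) / (real q ^ (g - i) - 1)"
      using d1 n1 by (intro divide_nonneg_pos) simp_all
    have eq: "(a - g) + (g - i) = a - i" using ig ga by arith
    have r1: "1 \<le> g - i" using ig by arith
    show "(real q ^ (a - i) - 1) / (real q ^ (g - i) - 1) \<le> theta q (a - g)"
      using factor_le[OF q r1, of "a - g"] unfolding eq .
  qed
  thus ?thesis by simp
qed

lemma gb_Suc:
  "gb q (Suc N) (Suc K) = (real q ^ Suc N - 1) / (real q ^ Suc K - 1) * gb q N K"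
  unfolding gb_def prod.lessThan_Suc_shift by simp

lemma qbinom_gb: "qbinom q N K = gb q N K"
proof -
  have "(\<Prod>i<K. real q ^ (K - i) - 1) = (\<Prod>i<K. (\<lambda>j. real q ^ (j + 1) - 1) (K - Suc i))"
    by (rule prod.cong) (auto simp: Suc_diff_Suc)
  also have "\<dots> = (\<Prod>i<K. real q ^ (i + 1) - 1)"
    by (rule prod.nat_diff_reindex)
  finally have "(\<Prod>i<K. real q ^ (K - i) - 1) = (\<Prod>i<K. real q ^ (i + 1) - 1)" .
  thus ?thesis unfolding qbinom_def gb_def by (simp add: prod_dividef)
qed

lemma gb_shift:
  assumes q: "2 \<le> q" and e: "e \<le> K" and KN: "K \<le> N" and c: "c + 1 \<le> N - K"
  shows "gb q (N - e) (K - e) * theta q c ^ e \<le> gb q N K"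
  using e
proof (induction e)
  case 0
  thus ?case by simp
next
  case (Suc e)
  have eK: "e < K" using Suc.prems by simp
  have eq: "gb q (N - e) (K - e) = (real q ^ (N - e) - 1) / (real q ^ (K - e) - 1) * gb q (N - Suc e) (K - Suc e)"
  proof -
    have "N - e = Suc (N - Suc e)" "K - e = Suc (K - Suc e)" using eK KN by auto
    thus ?thesis by (simp only: gb_Suc)
  qed
  have th: "theta q c \<le> (real q ^ (N - e) - 1) / (real q ^ (K - e) - 1)"
  proof -
    have Kq: "1 < real q ^ (K - e)" using pow_gt1[OF q] eK by simp
    have "theta q c \<le> real q ^ (c+1)" by (rule theta_le[OF q])
    also have "\<dots> \<le> real q ^ (N - K)" using c q by (intro power_increasing) auto
    finally have t1: "theta q c \<le> real q ^ (N - K)" .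
    have "theta q c * (real q ^ (K - e) - 1) \<le> real q ^ (N - K) * (real q ^ (K - e) - 1)"
      using t1 Kq by (intro mult_right_mono) auto
    also have "\<dots> = real q ^ (N - e) - real q ^ (N - K)"
    proof -
      have "N - e = (N - K) + (K - e)" using eK KN by auto
      thus ?thesis by (simp add: power_add algebra_simps)
    qed
    also have "\<dots> \<le> real q ^ (N - e) - 1" using q by simp
    finally show ?thesis using Kq by (simp add: le_divide_eq)
  qed
  have pos: "0 < gb q (N - Suc e) (K - Suc e)" using gb_pos[OF q] KN by simp
  have tp: "0 \<le> theta q c ^ e" using theta_pos[OF q, of c] by simp
  have "gb q (N - Suc e) (K - Suc e) * theta q c ^ Suc e
        = (theta q c * gb q (N - Suc e) (K - Suc e)) * theta q c ^ e" by simp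
  also have "\<dots> \<le> ((real q ^ (N - e) - 1) / (real q ^ (K - e) - 1) * gb q (N - Suc e) (K - Suc e)) * theta q c ^ e"
    using th pos tp by (intro mult_right_mono) auto
  also have "\<dots> = gb q (N - e) (K - e) * theta q c ^ e" using eq by simp
  also have "\<dots> \<le> gb q N K" using Suc.IH eK by simp
  finally show ?case .
qed



lemma mem_trans_iff: "x \<in> (\<lambda>w. p + w) ` W \<longleftrightarrow> x - p \<in> W" for p :: "'a::ab_group_add"
proof
  assume "x \<in> (\<lambda>w. p + w) ` W" thus "x - p \<in> W" by auto
next
  assume "x - p \<in> W"
  moreover have "x = p + (x - p)" by simp
  ultimately show "x \<in> (\<lambda>w. p + w) ` W" by blast
qed

lemma direction_trans:
  fixes W :: "('a::field^'n) set"
  assumes "vec.subspace W"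
  shows "direction ((\<lambda>w. p + w) ` W) = W"
proof
  show "direction ((\<lambda>w. p + w) ` W) \<subseteq> W"
  proof
    fix z assume "z \<in> direction ((\<lambda>w. p + w) ` W)"
    then obtain a b where "a \<in> W" "b \<in> W" "z = (p + a) - (p + b)" unfolding direction_def by blast
    thus "z \<in> W" using vec.subspace_diff[OF assms] by simp
  qed
next
  show "W \<subseteq> direction ((\<lambda>w. p + w) ` W)"
  proof
    fix z assume z: "z \<in> W"
    have "p + z \<in> (\<lambda>w. p + w) ` W" "p + 0 \<in> (\<lambda>w. p + w) ` W"
      using z vec.subspace_0[OF assms] by blast+
    moreover have "z = (p + z) - (p + 0)" by simp
    ultimately show "z \<in> direction ((\<lambda>w. p + w) ` W)" unfolding direction_def by blast
  qed
qed

lemma affine_trans: "vec.subspace W \<Longrightarrow> affine_sub ((\<lambda>w. p + w) ` W)"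
  unfolding affine_sub_def by blast

lemma affine_direction: "affine_sub S \<Longrightarrow> vec.subspace (direction S)"
  unfolding affine_sub_def using direction_trans by metis

lemma affine_nonempty: "affine_sub S \<Longrightarrow> S \<noteq> {}"
  unfolding affine_sub_def using vec.subspace_0 by blast

lemma affine_mem_iff:
  assumes "affine_sub S" "u \<in> S"
  shows "x \<in> S \<longleftrightarrow> x - u \<in> direction S"
proof -
  obtain p W where W: "vec.subspace W" and S: "S = (\<lambda>w. p + w) ` W"
    using assms(1) unfolding affine_sub_def by blast
  have dS: "direction S = W" using S direction_trans[OF W] by simp
  have u: "u - p \<in> W" using assms(2) S mem_trans_iff by blast
  have "x \<in> S \<longleftrightarrow> x - p \<in> W" using S mem_trans_iff by blast
  also have "\<dots> \<longleftrightarrow> x - u \<in> W"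
  proof
    assume "x - p \<in> W"
    hence "(x - p) - (u - p) \<in> W" using vec.subspace_diff[OF W] u by blast
    thus "x - u \<in> W" by simp
  next
    assume "x - u \<in> W"
    hence "(x - u) + (u - p) \<in> W" using vec.subspace_add[OF W] u by blast
    thus "x - p \<in> W" by simp
  qed
  finally show ?thesis using dS by simp
qed

lemma affine_eq:
  assumes "affine_sub S" "u \<in> S"
  shows "S = (\<lambda>w. u + w) ` direction S"
  using affine_mem_iff[OF assms] mem_trans_iff by blast

lemma direction_mono: "S \<subseteq> T \<Longrightarrow> direction S \<subseteq> direction T"
  unfolding direction_def by blast

lemma affine_inter:
  assumes A: "affine_sub A" and B: "affine_sub B" and p: "p \<in> A" "p \<in> B"
  shows "A \<inter> B = (\<lambda>w. p + w) ` (direction A \<inter> direction B)"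
    and "affine_sub (A \<inter> B)"
    and "direction (A \<inter> B) = direction A \<inter> direction B"
proof -
  show eq: "A \<inter> B = (\<lambda>w. p + w) ` (direction A \<inter> direction B)"
    using affine_mem_iff[OF A p(1)] affine_mem_iff[OF B p(2)] mem_trans_iff by blast
  have sub: "vec.subspace (direction A \<inter> direction B)"
    using affine_direction[OF A] affine_direction[OF B] by (rule vec.subspace_inter)
  show "affine_sub (A \<inter> B)" unfolding eq by (rule affine_trans[OF sub])
  show "direction (A \<inter> B) = direction A \<inter> direction B" unfolding eq by (rule direction_trans[OF sub])
qed



lemma card_span_indep:
  fixes B :: "('a::{field,finite}^'n) set"
  assumes "vec.independent B"
  shows "card (vec.span B) = CARD('a) ^ card B"
proof -
  have fB: "finite B" by simp
  let ?h = "\<lambda>u. \<Sum>v\<in>B. u v *s v"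
  have sp: "vec.span B = ?h ` (PiE B (\<lambda>_. UNIV))"
  proof
    show "vec.span B \<subseteq> ?h ` (PiE B (\<lambda>_. UNIV))"
    proof
      fix y assume "y \<in> vec.span B"
      then obtain u where y: "y = ?h u" using vec.span_finite[OF fB] by blast
      have "restrict u B \<in> PiE B (\<lambda>_. UNIV)" by simp
      moreover have "?h (restrict u B) = y" unfolding y by (rule sum.cong) simp_all
      ultimately show "y \<in> ?h ` (PiE B (\<lambda>_. UNIV))" by blast
    qed
  next
    show "?h ` (PiE B (\<lambda>_. UNIV)) \<subseteq> vec.span B"
      using vec.span_finite[OF fB] by blast
  qed
  have inj: "inj_on ?h (PiE B (\<lambda>_. UNIV))"
  proof (rule inj_onI)
    fix f g assume f: "f \<in> PiE B (\<lambda>_. UNIV)" and g: "g \<in> PiE B (\<lambda>_. UNIV)" and eq: "?h f = ?h g"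
    have "(\<Sum>v\<in>B. (f v - g v) *s v) = 0"
      using eq by (simp add: scaleR_diff_left sum_subtractf vector_sub_rdistrib)
    have "\<not> (\<exists>v\<in>B. f v - g v \<noteq> 0)"
    proof
      assume "\<exists>v\<in>B. f v - g v \<noteq> 0"
      hence "vec.dependent B" unfolding vec.dependent_finite[OF fB]
        apply (intro exI[of _ "\<lambda>v. f v - g v"])
        using \<open>(\<Sum>v\<in>B. (f v - g v) *s v) = 0\<close> by simp
      with assms show False by simp
    qed
    hence "\<forall>v\<in>B. f v - g v = 0" by blast
    thus "f = g" by (intro PiE_ext[OF f g]) simp
  qed
  have "card (vec.span B) = card (PiE B (\<lambda>_. UNIV :: 'a set))"
    unfolding sp by (rule card_image[OF inj])
  also have "\<dots> = CARD('a) ^ card B" by (simp add: card_PiE fB)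
  finally show ?thesis .
qed

lemma card_subspace:
  fixes S :: "('a::{field,finite}^'n) set"
  assumes "vec.subspace S"
  shows "card S = CARD('a) ^ vec.dim S"
proof -
  obtain B where B: "B \<subseteq> S" "vec.independent B" "S \<subseteq> vec.span B" "card B = vec.dim S"
    using vec.basis_exists by blast
  have "vec.span B = S" using B assms vec.span_minimal by blast
  thus ?thesis using card_span_indep[OF B(2)] B(4) by simp
qed

definition extl :: "('a::{field,finite}^'n) set \<Rightarrow> ('a^'n) set \<Rightarrow> nat \<Rightarrow> ('a^'n) list set" where
  "extl D L g = {xs. length xs = g \<and> set xs \<subseteq> L \<and> (\<forall>i<g. xs!i \<notin> vec.span (D \<union> set (take i xs)))}"

lemma extl_0: "extl D L 0 = {[]}"
  unfolding extl_def by auto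

lemma extl_Suc:
  "extl D L (Suc g) = (\<lambda>(xs,v). xs @ [v]) ` (SIGMA xs:extl D L g. L - vec.span (D \<union> set xs))"
proof
  show "extl D L (Suc g) \<subseteq> (\<lambda>(xs,v). xs @ [v]) ` (SIGMA xs:extl D L g. L - vec.span (D \<union> set xs))"
  proof
    fix ys assume ys: "ys \<in> extl D L (Suc g)"
    hence len: "length ys = Suc g" by (simp add: extl_def)
    then obtain xs v where eq: "ys = xs @ [v]"
      by (metis length_Suc_conv_rev)
    have lxs: "length xs = g" using len eq by simp
    have "xs \<in> extl D L g"
      unfolding extl_def
    proof (intro CollectI conjI allI impI)
      show "length xs = g" by fact
      show "set xs \<subseteq> L" using ys eq by (simp add: extl_def)
      fix i assume "i < g"
      hence "ys ! i = xs ! i" "take i ys = take i xs" using eq lxs by (auto simp: nth_append)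
      moreover have "\<forall>i<Suc g. ys ! i \<notin> vec.span (D \<union> set (take i ys))" using ys by (simp add: extl_def)
      ultimately show "xs ! i \<notin> vec.span (D \<union> set (take i xs))" using less_SucI[OF \<open>i < g\<close>] by metis
    qed
    moreover have "v \<in> L - vec.span (D \<union> set xs)"
    proof -
      have "ys ! g = v" "take g ys = xs" using eq lxs by auto
      thus ?thesis using ys eq by (auto simp: extl_def)
    qed
    ultimately show "ys \<in> (\<lambda>(xs,v). xs @ [v]) ` (SIGMA xs:extl D L g. L - vec.span (D \<union> set xs))"
    proof -
      have "(xs, v) \<in> (SIGMA xs:extl D L g. L - vec.span (D \<union> set xs))"
        using \<open>xs \<in> extl D L g\<close> \<open>v \<in> L - vec.span (D \<union> set xs)\<close> by blast
      thus ?thesis unfolding eq by (rule image_eqI[rotated]) simp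
    qed
  qed
next
  show "(\<lambda>(xs,v). xs @ [v]) ` (SIGMA xs:extl D L g. L - vec.span (D \<union> set xs)) \<subseteq> extl D L (Suc g)"
  proof clarify
    fix xs v assume xs: "xs \<in> extl D L g" and v: "v \<in> L" "v \<notin> vec.span (D \<union> set xs)"
    have lxs: "length xs = g" using xs by (simp add: extl_def)
    show "xs @ [v] \<in> extl D L (Suc g)"
      unfolding extl_def
    proof (intro CollectI conjI allI impI)
      show "length (xs @ [v]) = Suc g" using lxs by simp
      show "set (xs @ [v]) \<subseteq> L" using xs v by (auto simp: extl_def)
      fix i assume i: "i < Suc g"
      show "(xs @ [v]) ! i \<notin> vec.span (D \<union> set (take i (xs @ [v])))"
      proof (cases "i < g")
        case True
        hence "(xs @ [v]) ! i = xs ! i" "take i (xs @ [v]) = take i xs" using lxs by (auto simp: nth_append)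
        thus ?thesis using xs True by (auto simp: extl_def)
      next
        case False
        hence "i = g" using i by simp
        thus ?thesis using v lxs[symmetric] by simp
      qed
    qed
  qed
qed

lemma extl_dim:
  assumes "xs \<in> extl D L g"
  shows "vec.dim (D \<union> set xs) = vec.dim D + g"
  using assms
proof (induction g arbitrary: xs)
  case 0
  thus ?case by (simp add: extl_0)
next
  case (Suc g)
  obtain p where p: "p \<in> (SIGMA xs:extl D L g. L - vec.span (D \<union> set xs))" and xp: "xs = (\<lambda>(xs,v). xs @ [v]) p"
    using Suc.prems unfolding extl_Suc by blast
  obtain ys v where pe: "p = (ys, v)" by (cases p)
  have eq: "xs = ys @ [v]" and ys: "ys \<in> extl D L g" and v: "v \<notin> vec.span (D \<union> set ys)"
    using p xp pe by auto
  have "D \<union> set xs = insert v (D \<union> set ys)" using eq by auto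
  hence "vec.dim (D \<union> set xs) = vec.dim (D \<union> set ys) + 1"
    using v by (simp add: vec.dim_insert)
  thus ?case using Suc.IH[OF ys] by simp
qed

lemma extl_span_sub:
  assumes "xs \<in> extl D L g" "D \<subseteq> L" "vec.subspace L"
  shows "vec.span (D \<union> set xs) \<subseteq> L"
proof -
  have "D \<union> set xs \<subseteq> L" using assms by (auto simp: extl_def)
  thus ?thesis using assms(3) vec.span_minimal by blast
qed

lemma card_extl:
  fixes D L :: "('a::{field,finite}^'n) set"
  assumes "vec.subspace D" "vec.subspace L" "D \<subseteq> L"
  shows "card (extl D L g) = (\<Prod>i<g. CARD('a) ^ vec.dim L - CARD('a) ^ (vec.dim D + i))"
proof (induction g)
  case 0
  thus ?case by (simp add: extl_0)
next
  case (Suc g)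
  have inj: "inj_on (\<lambda>(xs,v). xs @ [v]) (SIGMA xs:extl D L g. L - vec.span (D \<union> set xs))"
    by (rule inj_onI) auto
  have c: "card (L - vec.span (D \<union> set xs)) = CARD('a) ^ vec.dim L - CARD('a) ^ (vec.dim D + g)"
    if xs: "xs \<in> extl D L g" for xs
  proof -
    have sub: "vec.span (D \<union> set xs) \<subseteq> L" using extl_span_sub[OF xs assms(3,2)] .
    have "card (L - vec.span (D \<union> set xs)) = card L - card (vec.span (D \<union> set xs))"
      by (rule card_Diff_subset[OF _ sub]) simp
    also have "\<dots> = CARD('a) ^ vec.dim L - CARD('a) ^ (vec.dim D + g)"
      using card_subspace[OF assms(2)] card_subspace[OF vec.subspace_span[of "D \<union> set xs"]]
        extl_dim[OF xs] by simp
    finally show ?thesis .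
  qed
  have "card (extl D L (Suc g)) = card (SIGMA xs:extl D L g. L - vec.span (D \<union> set xs))"
    unfolding extl_Suc by (rule card_image[OF inj])
  also have "\<dots> = (\<Sum>xs\<in>extl D L g. card (L - vec.span (D \<union> set xs)))"
  proof (rule card_SigmaI)
    show "finite (extl D L g)"
      by (rule finite_subset[OF _ finite_lists_length_eq[of UNIV g]]) (auto simp: extl_def)
  qed simp
  also have "\<dots> = (\<Sum>xs\<in>extl D L g. CARD('a) ^ vec.dim L - CARD('a) ^ (vec.dim D + g))"
    by (rule sum.cong) (simp_all add: c)
  also have "\<dots> = card (extl D L g) * (CARD('a) ^ vec.dim L - CARD('a) ^ (vec.dim D + g))"
    by simp
  finally show ?case using Suc.IH by simp
qed

lemma finite_extl: "finite (extl D L g)"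
  by (rule finite_subset[OF _ finite_lists_length_eq[of UNIV g]]) (auto simp: extl_def)

lemma extl_mono: "xs \<in> extl D M g \<Longrightarrow> M \<subseteq> L \<Longrightarrow> xs \<in> extl D L g"
  unfolding extl_def by auto

lemma extl_span_eq:
  assumes "xs \<in> extl D M g" "vec.subspace D" "vec.subspace M" "D \<subseteq> M" "vec.dim M = vec.dim D + g"
  shows "vec.span (D \<union> set xs) = M"
proof (rule vec.subspace_dim_equal)
  show "vec.subspace (vec.span (D \<union> set xs))" by (rule vec.subspace_span)
  show "vec.subspace M" by fact
  show "vec.span (D \<union> set xs) \<subseteq> M" by (rule extl_span_sub[OF assms(1,4,3)])
  show "vec.dim M \<le> vec.dim (vec.span (D \<union> set xs))"
    using extl_dim[OF assms(1)] assms(5) by simp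
qed

lemma count_sub:
  fixes D L :: "('a::{field,finite}^'n) set"
  assumes D: "vec.subspace D" and L: "vec.subspace L" and DL: "D \<subseteq> L"
  shows "card {M. vec.subspace M \<and> D \<subseteq> M \<and> M \<subseteq> L \<and> vec.dim M = vec.dim D + g}
           * (\<Prod>i<g. CARD('a) ^ (vec.dim D + g) - CARD('a) ^ (vec.dim D + i))
         \<le> (\<Prod>i<g. CARD('a) ^ vec.dim L - CARD('a) ^ (vec.dim D + i))"
proof -
  define MM where "MM = {M. vec.subspace M \<and> D \<subseteq> M \<and> M \<subseteq> L \<and> vec.dim M = vec.dim D + g}"
  define c where "c = (\<Prod>i<g. CARD('a) ^ (vec.dim D + g) - CARD('a) ^ (vec.dim D + i))"
  have fib: "card (extl D M g) = c" if "M \<in> MM" for M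
    using card_extl[OF D, of M g] that unfolding MM_def c_def by simp
  have disj: "\<forall>M\<in>MM. \<forall>M'\<in>MM. M \<noteq> M' \<longrightarrow> extl D M g \<inter> extl D M' g = {}"
  proof (intro ballI impI)
    fix M M' assume M: "M \<in> MM" and M': "M' \<in> MM" and ne: "M \<noteq> M'"
    show "extl D M g \<inter> extl D M' g = {}"
    proof (rule ccontr)
      assume "extl D M g \<inter> extl D M' g \<noteq> {}"
      then obtain xs where xs: "xs \<in> extl D M g" "xs \<in> extl D M' g" by blast
      have "vec.span (D \<union> set xs) = M" using extl_span_eq[OF xs(1) D] M unfolding MM_def by blast
      moreover have "vec.span (D \<union> set xs) = M'" using extl_span_eq[OF xs(2) D] M' unfolding MM_def by blast
      ultimately show False using ne by simp
    qed
  qed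
  have "card MM * c = (\<Sum>M\<in>MM. card (extl D M g))"
    using fib by simp
  also have "\<dots> = card (\<Union>M\<in>MM. extl D M g)"
    by (rule card_UN_disjoint[symmetric]) (simp_all add: finite_extl disj)
  also have "\<dots> \<le> card (extl D L g)"
    by (rule card_mono[OF finite_extl]) (auto simp: MM_def intro: extl_mono)
  also have "\<dots> = (\<Prod>i<g. CARD('a) ^ vec.dim L - CARD('a) ^ (vec.dim D + i))"
    by (rule card_extl[OF D L DL])
  finally show ?thesis unfolding MM_def c_def .
qed

lemma card_field_ge2: "2 \<le> CARD('a::{field,finite})"
proof -
  have "card {0::'a, 1} = 2" by simp
  moreover have "card {0::'a, 1} \<le> CARD('a)" by (rule card_mono) simp_all
  ultimately show ?thesis by simp
qed

lemma pow_diff_real: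
  assumes "b \<le> c" "1 \<le> q"
  shows "real (q ^ c - q ^ b) = real q ^ b * (real q ^ (c - b) - 1)"
proof -
  have le: "q ^ b \<le> q ^ c" using assms by (simp add: power_increasing)
  have "real q ^ c = real q ^ b * real q ^ (c - b)"
    using assms(1) by (simp add: power_add[symmetric])
  thus ?thesis using le by (simp add: of_nat_diff algebra_simps)
qed

lemma count_sub_real:
  fixes D L :: "('a::{field,finite}^'n) set"
  assumes D: "vec.subspace D" and L: "vec.subspace L" and DL: "D \<subseteq> L"
    and dg: "vec.dim D + g \<le> vec.dim L"
  shows "real (card {M. vec.subspace M \<and> D \<subseteq> M \<and> M \<subseteq> L \<and> vec.dim M = vec.dim D + g})
         \<le> gb CARD('a) (vec.dim L - vec.dim D) g"
proof -
  define q where "q = CARD('a)"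
  define d where "d = vec.dim D"
  define l where "l = vec.dim L"
  define c where "c = card {M. vec.subspace M \<and> D \<subseteq> M \<and> M \<subseteq> L \<and> vec.dim M = vec.dim D + g}"
  have q2: "2 \<le> q" unfolding q_def by (rule card_field_ge2)
  hence q1: "1 \<le> q" by simp
  have nat: "c * (\<Prod>i<g. q ^ (d + g) - q ^ (d + i)) \<le> (\<Prod>i<g. q ^ l - q ^ (d + i))"
    using count_sub[OF D L DL, of g] unfolding q_def d_def l_def c_def .
  hence "real (c * (\<Prod>i<g. q ^ (d + g) - q ^ (d + i))) \<le> real (\<Prod>i<g. q ^ l - q ^ (d + i))"
    by (simp only: of_nat_le_iff)
  hence r: "real c * (\<Prod>i<g. real (q ^ (d + g) - q ^ (d + i))) \<le> (\<Prod>i<g. real (q ^ l - q ^ (d + i)))"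
    by (simp only: of_nat_mult of_nat_prod)
  have e1: "(\<Prod>i<g. real (q ^ (d + g) - q ^ (d + i))) = (\<Prod>i<g. real q ^ (d + i)) * (\<Prod>i<g. real q ^ (g - i) - 1)"
  proof -
    have "(\<Prod>i<g. real (q ^ (d + g) - q ^ (d + i))) = (\<Prod>i<g. real q ^ (d + i) * (real q ^ (g - i) - 1))"
    proof (rule prod.cong[OF refl])
      fix i assume "i \<in> {..<g}"
      hence "d + i \<le> d + g" "d + g - (d + i) = g - i" by auto
      thus "real (q ^ (d + g) - q ^ (d + i)) = real q ^ (d + i) * (real q ^ (g - i) - 1)"
        using pow_diff_real[OF _ q1] by metis
    qed
    thus ?thesis by (simp add: prod.distrib)
  qed
  have e2: "(\<Prod>i<g. real (q ^ l - q ^ (d + i))) = (\<Prod>i<g. real q ^ (d + i)) * (\<Prod>i<g. real q ^ (l - d - i) - 1)"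
  proof -
    have "(\<Prod>i<g. real (q ^ l - q ^ (d + i))) = (\<Prod>i<g. real q ^ (d + i) * (real q ^ (l - d - i) - 1))"
    proof (rule prod.cong[OF refl])
      fix i assume "i \<in> {..<g}"
      hence "d + i \<le> l" "l - (d + i) = l - d - i" using dg unfolding d_def l_def by auto
      thus "real (q ^ l - q ^ (d + i)) = real q ^ (d + i) * (real q ^ (l - d - i) - 1)"
        using pow_diff_real[OF _ q1] by metis
    qed
    thus ?thesis by (simp add: prod.distrib)
  qed
  have P0: "0 < (\<Prod>i<g. real q ^ (d + i))" using q2 by (intro prod_pos) simp
  have Pd: "0 < (\<Prod>i<g. real q ^ (g - i) - 1)"
    using q2 by (intro prod_pos) (simp add: pow_gt1)
  from r have "(\<Prod>i<g. real q ^ (d + i)) * (real c * (\<Prod>i<g. real q ^ (g - i) - 1))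
      \<le> (\<Prod>i<g. real q ^ (d + i)) * (\<Prod>i<g. real q ^ (l - d - i) - 1)"
    unfolding e1 e2 by (simp add: algebra_simps)
  hence "real c * (\<Prod>i<g. real q ^ (g - i) - 1) \<le> (\<Prod>i<g. real q ^ (l - d - i) - 1)"
    using P0 by (simp add: mult_le_cancel_left_pos)
  hence "real c \<le> (\<Prod>i<g. real q ^ (l - d - i) - 1) / (\<Prod>i<g. real q ^ (g - i) - 1)"
    using Pd by (simp add: le_divide_eq)
  also have "\<dots> = gb q (l - d) g" unfolding gb_def by (simp add: prod_dividef)
  finally show ?thesis unfolding c_def q_def l_def d_def .
qed



lemma ext_sub:
  fixes X Y :: "('a::field^'n) set"
  assumes X: "vec.subspace X" and Y: "vec.subspace Y" and XY: "X \<subseteq> Y"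
    and j: "vec.dim X + j \<le> vec.dim Y"
  shows "\<exists>Z. vec.subspace Z \<and> X \<subseteq> Z \<and> Z \<subseteq> Y \<and> vec.dim Z = vec.dim X + j"
  using j
proof (induction j)
  case 0
  show ?case using X XY by (intro exI[of _ X]) simp
next
  case (Suc j)
  have "vec.dim X + j \<le> vec.dim Y" using Suc.prems by simp
  then obtain Z where Z: "vec.subspace Z" "X \<subseteq> Z" "Z \<subseteq> Y" "vec.dim Z = vec.dim X + j"
    using Suc.IH by blast
  have "\<not> Y \<subseteq> Z"
  proof
    assume "Y \<subseteq> Z"
    hence "vec.dim Y \<le> vec.dim Z" by (rule vec.dim_subset)
    thus False using Z(4) Suc.prems by simp
  qed
  then obtain y where y: "y \<in> Y" "y \<notin> Z" by blast
  have spZ: "vec.span Z = Z" using Z(1) by (rule vec.span_eq_iff[THEN iffD2])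
  have yZ: "y \<notin> vec.span Z" unfolding spZ by (rule y(2))
  define Z' where "Z' = vec.span (insert y Z)"
  have "vec.subspace Z'" unfolding Z'_def by (rule vec.subspace_span)
  moreover have "X \<subseteq> Z'" unfolding Z'_def using Z(2) vec.span_superset by blast
  moreover have "Z' \<subseteq> Y" unfolding Z'_def using Z(3) y(1) Y vec.span_minimal by blast
  moreover have "vec.dim Z' = vec.dim X + Suc j"
    unfolding Z'_def vec.dim_span using yZ Z(4) by (simp add: vec.dim_insert)
  ultimately show ?case by blast
qed

lemma vdim_UNIV: "vec.dim (UNIV :: ('a::field^'n) set) = CARD('n)"
  by (simp add: card_cart_basis)

lemma kspace_exists:
  assumes "k \<le> CARD('n)"
  shows "\<exists>Z :: ('a::field^'n) set. kspace k Z"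
proof -
  have "vec.dim {0::'a^'n} + k \<le> vec.dim (UNIV :: ('a^'n) set)"
    using assms by (simp add: card_cart_basis)
  then obtain Z :: "('a^'n) set" where Z: "vec.subspace Z" "vec.dim Z = vec.dim {0::'a^'n} + k"
    using ext_sub[OF vec.subspace_single_0 vec.subspace_UNIV] by blast
  have eq: "(\<lambda>w. 0 + w) ` Z = Z" by simp
  have "affine_sub Z" using affine_trans[OF Z(1), of 0] unfolding eq .
  moreover have "adim Z = k" unfolding adim_def using direction_trans[OF Z(1), of 0] Z(2) unfolding eq by simp
  ultimately show ?thesis unfolding kspace_def by blast
qed

lemma adim_le: "affine_sub U \<Longrightarrow> affine_sub A \<Longrightarrow> U \<subseteq> A \<Longrightarrow> adim U \<le> adim A"
  unfolding adim_def by (intro vec.dim_subset direction_mono)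

lemma step_bound:
  fixes F :: "('a::{field,finite}^'n) set set" and U B :: "('a^'n) set"
  assumes Fk: "\<forall>A\<in>F. kspace k A" and Fm: "\<forall>A\<in>F. \<forall>B\<in>F. meets_in t A B"
    and U: "affine_sub U" and mU: "adim U = m"
    and B: "B \<in> F" and nB: "\<not> meets_in t U B"
    and IH: "\<And>V g. affine_sub V \<Longrightarrow> adim V = m + g \<Longrightarrow> 1 \<le> g \<Longrightarrow>
               real (card {A\<in>F. V \<subseteq> A}) * theta CARD('a) (k - t) ^ (m + g) \<le> R"
    and R: "0 \<le> R"
  shows "real (card {A\<in>F. U \<subseteq> A}) * theta CARD('a) (k - t) ^ m \<le> R"
proof (cases "{A\<in>F. U \<subseteq> A} = {}")
  case True
  show ?thesis using R unfolding True by simp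
next
  case False
  then obtain A1 where A1: "A1 \<in> F" "U \<subseteq> A1" by blast
  define q where "q = CARD('a)"
  define th where "th = theta q (k - t)"
  have q2: "2 \<le> q" unfolding q_def by (rule card_field_ge2)
  have thpos: "0 < th" unfolding th_def using theta_pos[OF q2] .
  define D where "D = direction U"
  have Dsub: "vec.subspace D" unfolding D_def by (rule affine_direction[OF U])
  have dimD: "vec.dim D = m" using mU unfolding adim_def D_def .
  have Bk: "kspace k B" using Fk B by blast
  have Baff: "affine_sub B" using Bk unfolding kspace_def by blast
  define E where "E = direction B"
  have Esub: "vec.subspace E" unfolding E_def by (rule affine_direction[OF Baff])
  have dimE: "vec.dim E = k" using Bk unfolding kspace_def adim_def E_def by blast
  obtain u0 where u0: "u0 \<in> U" and u0B: "U \<inter> B \<noteq> {} \<longrightarrow> u0 \<in> B"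
  proof (cases "U \<inter> B = {}")
    case True
    obtain u where "u \<in> U" using affine_nonempty[OF U] by blast
    thus ?thesis using that True by blast
  next
    case False
    then obtain u where "u \<in> U" "u \<in> B" by blast
    thus ?thesis using that by blast
  qed
  obtain b where b: "b \<in> B" using affine_nonempty[OF Baff] by blast
  define L where "L = vec.span (insert (b - u0) E)"
  have Lsub: "vec.subspace L" unfolding L_def by (rule vec.subspace_span)
  have EL: "E \<subseteq> L" unfolding L_def using vec.span_superset by blast
  have bL: "b - u0 \<in> L" unfolding L_def using vec.span_superset by blast
  define l where "l = vec.dim L"
  have lk: "l \<le> k + 1" unfolding l_def L_def vec.dim_span using dimE by (simp add: vec.dim_insert)
  define X where "X = D \<inter> L"
  have Xsub: "vec.subspace X" unfolding X_def by (rule vec.subspace_inter[OF Dsub Lsub])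
  define s where "s = vec.dim X"
  define g where "g = max 1 (t + l - k - s)"
  have spanE: "vec.span E = E" using Esub by (rule vec.span_eq_iff[THEN iffD2])
  have spanX: "vec.span X = X" using Xsub by (rule vec.span_eq_iff[THEN iffD2])
  have cne: "L = E \<and> s < t" if ne: "U \<inter> B \<noteq> {}"
  proof
    have u0B': "u0 \<in> B" using u0B ne by blast
    have "b - u0 \<in> E" unfolding E_def direction_def using b u0B' by blast
    hence "insert (b - u0) E = E" by blast
    thus LE: "L = E" unfolding L_def using spanE by simp
    have "adim (U \<inter> B) < t" using nB ne unfolding meets_in_def by simp
    moreover have "direction (U \<inter> B) = D \<inter> E"
      using affine_inter(3)[OF U Baff u0 u0B'] unfolding D_def E_def .
    ultimately show "s < t" unfolding s_def X_def adim_def LE by simp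
  qed
  have KC: "s + g \<le> vec.dim (direction A \<inter> L)" if A: "A \<in> F" "U \<subseteq> A" for A
  proof -
    have Ak: "kspace k A" using Fk A by blast
    have Aaff: "affine_sub A" using Ak unfolding kspace_def by blast
    define DA where "DA = direction A"
    have DAsub: "vec.subspace DA" unfolding DA_def by (rule affine_direction[OF Aaff])
    have DDA: "D \<subseteq> DA" unfolding D_def DA_def by (rule direction_mono[OF A(2)])
    have mAB: "meets_in t A B" using Fm A(1) B by blast
    then obtain p where pA: "p \<in> A" and pB: "p \<in> B" unfolding meets_in_def by blast
    have "t \<le> adim (A \<inter> B)" using mAB unfolding meets_in_def by blast
    moreover have "direction (A \<inter> B) = DA \<inter> E"
      using affine_inter(3)[OF Aaff Baff pA pB] unfolding DA_def E_def .
    ultimately have tAE: "t \<le> vec.dim (DA \<inter> E)" unfolding adim_def by simp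
    show ?thesis
    proof (cases "U \<inter> B = {}")
      case False
      with cne have LE: "L = E" and st: "s < t" by auto
      have "g = t - s" unfolding g_def LE l_def using st dimE by simp
      thus ?thesis using tAE st LE unfolding DA_def by simp
    next
      case True
      define w where "w = p - u0"
      have u0A: "u0 \<in> A" using u0 A(2) by blast
      have wDA: "w \<in> DA" unfolding w_def DA_def direction_def using pA u0A by blast
      have "p - b \<in> E" unfolding E_def direction_def using pB b by blast
      hence "p - b \<in> L" using EL by blast
      hence "(p - b) + (b - u0) \<in> L" using bL vec.subspace_add[OF Lsub] by blast
      moreover have "(p - b) + (b - u0) = w" unfolding w_def by (simp add: algebra_simps)
      ultimately have wL: "w \<in> L" by simp
      have wE: "w \<notin> E"
      proof
        assume "w \<in> E"
        hence "-w \<in> E" using vec.subspace_neg[OF Esub] by blast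
        hence "u0 - p \<in> E" unfolding w_def by simp
        hence "u0 \<in> B" using affine_mem_iff[OF Baff pB] unfolding E_def by blast
        thus False using True u0 by blast
      qed
      have wD: "w \<notin> D"
      proof
        assume "w \<in> D"
        hence "p \<in> U" using affine_mem_iff[OF U u0] unfolding D_def w_def by blast
        thus False using True pB by blast
      qed
      have DAE: "vec.subspace (DA \<inter> E)" by (rule vec.subspace_inter[OF DAsub Esub])
      have spanDAE: "vec.span (DA \<inter> E) = DA \<inter> E" using DAE by (rule vec.span_eq_iff[THEN iffD2])
      have sub1: "insert w (DA \<inter> E) \<subseteq> DA \<inter> L" using wDA wL EL by blast
      have "vec.dim (insert w (DA \<inter> E)) = vec.dim (DA \<inter> E) + 1"
      proof -
        have "w \<notin> vec.span (DA \<inter> E)" unfolding spanDAE using wE by blast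
        thus ?thesis by (simp add: vec.dim_insert)
      qed
      hence d1: "t + 1 \<le> vec.dim (DA \<inter> L)"
        using vec.dim_subset[OF sub1] tAE by simp
      have sub2: "insert w X \<subseteq> DA \<inter> L" using wDA wL DDA unfolding X_def by blast
      have "vec.dim (insert w X) = s + 1"
      proof -
        have "w \<notin> vec.span X" unfolding spanX unfolding X_def using wD by blast
        thus ?thesis unfolding s_def by (simp add: vec.dim_insert)
      qed
      hence d2: "s + 1 \<le> vec.dim (DA \<inter> L)"
        using vec.dim_subset[OF sub2] by simp
      have "s + g \<le> max (s + 1) (t + 1)" unfolding g_def using lk by arith
      thus ?thesis using d1 d2 unfolding DA_def by simp
    qed
  qed
  have dA1: "s + g \<le> l"
  proof -
    have "vec.dim (direction A1 \<inter> L) \<le> vec.dim L" by (rule vec.dim_subset) blast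
    thus ?thesis using KC[OF A1] unfolding l_def by simp
  qed
  have g1: "1 \<le> g" unfolding g_def by simp
  have XL: "X \<subseteq> L" unfolding X_def by blast
  define MM where "MM = {M. vec.subspace M \<and> X \<subseteq> M \<and> M \<subseteq> L \<and> vec.dim M = vec.dim X + g}"
  have cardMM: "real (card MM) \<le> th ^ g"
  proof -
    have "real (card MM) \<le> gb q (l - s) g"
      using count_sub_real[OF Xsub Lsub XL, of g] dA1 unfolding MM_def q_def l_def s_def by simp
    also have "\<dots> \<le> theta q (l - s - g) ^ g"
      using gb_le_theta[OF q2, of g "l - s"] dA1 by simp
    also have "\<dots> \<le> th ^ g"
    proof (rule power_mono)
      have "l - s - g \<le> k - t" unfolding g_def using lk by arith
      thus "theta q (l - s - g) \<le> th" unfolding th_def by (rule theta_mono[OF q2])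
      show "0 \<le> theta q (l - s - g)" using theta_pos[OF q2] less_imp_le by blast
    qed
    finally show ?thesis .
  qed
  define SM where "SM M = {x + y |x y. x \<in> D \<and> y \<in> M}" for M
  define V where "V M = (\<lambda>v. u0 + v) ` SM M" for M
  have VM: "affine_sub (V M) \<and> adim (V M) = m + g" if M: "M \<in> MM" for M
  proof -
    have Msub: "vec.subspace M" and XM: "X \<subseteq> M" and MsL: "M \<subseteq> L" and dM: "vec.dim M = s + g"
      using M unfolding MM_def s_def by auto
    have SMsub: "vec.subspace (SM M)" unfolding SM_def by (rule vec.subspace_sums[OF Dsub Msub])
    have DM: "D \<inter> M = X" using XM MsL unfolding X_def by blast
    have "vec.dim (SM M) + vec.dim (D \<inter> M) = vec.dim D + vec.dim M"
      unfolding SM_def by (rule vec.dim_sums_Int[OF Dsub Msub])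
    hence dSM: "vec.dim (SM M) = m + g" using DM dM dimD unfolding s_def by simp
    show ?thesis
      unfolding V_def adim_def direction_trans[OF SMsub] using affine_trans[OF SMsub] dSM by simp
  qed
  have cover: "{A\<in>F. U \<subseteq> A} \<subseteq> (\<Union>M\<in>MM. {A\<in>F. V M \<subseteq> A})"
  proof
    fix A assume "A \<in> {A\<in>F. U \<subseteq> A}"
    hence A: "A \<in> F" "U \<subseteq> A" by auto
    have Aaff: "affine_sub A" using Fk A(1) unfolding kspace_def by blast
    define DA where "DA = direction A"
    have DAsub: "vec.subspace DA" unfolding DA_def by (rule affine_direction[OF Aaff])
    have DDA: "D \<subseteq> DA" unfolding D_def DA_def by (rule direction_mono[OF A(2)])
    have Ysub: "vec.subspace (DA \<inter> L)" by (rule vec.subspace_inter[OF DAsub Lsub])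
    have XY: "X \<subseteq> DA \<inter> L" using DDA unfolding X_def by blast
    have "vec.dim X + g \<le> vec.dim (DA \<inter> L)" using KC[OF A] unfolding s_def DA_def by simp
    then obtain M where M: "vec.subspace M" "X \<subseteq> M" "M \<subseteq> DA \<inter> L" "vec.dim M = vec.dim X + g"
      using ext_sub[OF Xsub Ysub XY] by blast
    have MM: "M \<in> MM" unfolding MM_def using M by blast
    have u0A: "u0 \<in> A" using u0 A(2) by blast
    have "V M \<subseteq> A"
    proof
      fix z assume "z \<in> V M"
      then obtain x y where xy: "x \<in> D" "y \<in> M" "z = u0 + (x + y)" unfolding V_def SM_def by blast
      have "x + y \<in> DA" using xy(1,2) DDA M(3) vec.subspace_add[OF DAsub] by blast
      moreover have "z - u0 = x + y" using xy(3) by simp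
      ultimately show "z \<in> A" using affine_mem_iff[OF Aaff u0A] unfolding DA_def by simp
    qed
    thus "A \<in> (\<Union>M\<in>MM. {A\<in>F. V M \<subseteq> A})" using MM A by blast
  qed
  have "card {A\<in>F. U \<subseteq> A} \<le> card (\<Union>M\<in>MM. {A\<in>F. V M \<subseteq> A})"
    by (rule card_mono[OF _ cover]) simp
  also have "\<dots> \<le> (\<Sum>M\<in>MM. card {A\<in>F. V M \<subseteq> A})"
    by (rule card_UN_le) simp
  finally have "real (card {A\<in>F. U \<subseteq> A}) \<le> real (\<Sum>M\<in>MM. card {A\<in>F. V M \<subseteq> A})"
    by (simp only: of_nat_le_iff)
  hence c1: "real (card {A\<in>F. U \<subseteq> A}) \<le> (\<Sum>M\<in>MM. real (card {A\<in>F. V M \<subseteq> A}))"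
    by (simp only: of_nat_sum)
  have thmg: "0 \<le> th ^ (m + g)" using thpos by simp
  have "real (card {A\<in>F. U \<subseteq> A}) * th ^ (m + g) \<le> (\<Sum>M\<in>MM. real (card {A\<in>F. V M \<subseteq> A})) * th ^ (m + g)"
    using c1 thmg by (rule mult_right_mono)
  also have "\<dots> = (\<Sum>M\<in>MM. real (card {A\<in>F. V M \<subseteq> A}) * th ^ (m + g))"
    by (rule sum_distrib_right)
  also have "\<dots> \<le> (\<Sum>M\<in>MM. R)"
  proof (rule sum_mono)
    fix M assume "M \<in> MM"
    thus "real (card {A\<in>F. V M \<subseteq> A}) * th ^ (m + g) \<le> R"
      using IH[of "V M" g] VM g1 unfolding th_def q_def by blast
  qed
  also have "\<dots> = real (card MM) * R" by simp
  also have "\<dots> \<le> th ^ g * R" using cardMM R by (rule mult_right_mono)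
  finally have ch: "real (card {A\<in>F. U \<subseteq> A}) * th ^ (m + g) \<le> th ^ g * R" .
  have pa: "th ^ (m + g) = th ^ m * th ^ g" by (rule power_add)
  have "(real (card {A\<in>F. U \<subseteq> A}) * th ^ m) * th ^ g \<le> th ^ g * R"
    using ch unfolding pa by (simp only: mult.assoc)
  hence "(real (card {A\<in>F. U \<subseteq> A}) * th ^ m) * th ^ g \<le> R * th ^ g"
    by (simp only: mult.commute[of "th ^ g" R])
  hence "real (card {A\<in>F. U \<subseteq> A}) * th ^ m \<le> R"
    using thpos by (simp add: mult_le_cancel_right)
  thus ?thesis unfolding th_def q_def .
qed

lemma base_bound:
  fixes F :: "('a::{field,finite}^'n) set set" and U :: "('a^'n) set"
  assumes Fk: "\<forall>A\<in>F. kspace k A"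
    and U: "affine_sub U" and mU: "adim U = m" and mk: "m \<le> k" and kn: "k \<le> CARD('n)"
  shows "real (card {A\<in>F. U \<subseteq> A}) \<le> gb CARD('a) (CARD('n) - m) (k - m)"
proof -
  define D where "D = direction U"
  have Dsub: "vec.subspace D" unfolding D_def by (rule affine_direction[OF U])
  have dimD: "vec.dim D = m" using mU unfolding adim_def D_def .
  obtain u0 where u0: "u0 \<in> U" using affine_nonempty[OF U] by blast
  define MM where "MM = {M. vec.subspace M \<and> D \<subseteq> M \<and> M \<subseteq> UNIV \<and> vec.dim M = vec.dim D + (k - m)}"
  have inj: "inj_on direction {A\<in>F. U \<subseteq> A}"
  proof (rule inj_onI)
    fix A A' assume A: "A \<in> {A\<in>F. U \<subseteq> A}" and A': "A' \<in> {A\<in>F. U \<subseteq> A}" and eq: "direction A = direction A'"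
    have "affine_sub A" "affine_sub A'" using A A' Fk unfolding kspace_def by auto
    moreover have "u0 \<in> A" "u0 \<in> A'" using A A' u0 by auto
    ultimately show "A = A'" using affine_eq eq by metis
  qed
  have img: "direction ` {A\<in>F. U \<subseteq> A} \<subseteq> MM"
  proof
    fix M assume "M \<in> direction ` {A\<in>F. U \<subseteq> A}"
    then obtain A where A: "A \<in> F" "U \<subseteq> A" and M: "M = direction A" by blast
    have Ak: "affine_sub A" "adim A = k" using A Fk unfolding kspace_def by auto
    show "M \<in> MM" unfolding MM_def M
      using affine_direction[OF Ak(1)] direction_mono[OF A(2)] Ak(2) mk dimD
      unfolding D_def adim_def by simp
  qed
  have "card {A\<in>F. U \<subseteq> A} \<le> card MM"
    by (rule card_inj_on_le[OF inj img]) simp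
  hence "real (card {A\<in>F. U \<subseteq> A}) \<le> real (card MM)" by simp
  also have "\<dots> \<le> gb CARD('a) (vec.dim (UNIV :: ('a^'n) set) - vec.dim D) (k - m)"
    unfolding MM_def
  proof (rule count_sub_real[OF Dsub vec.subspace_UNIV subset_UNIV])
    show "vec.dim D + (k - m) \<le> vec.dim (UNIV :: ('a^'n) set)"
      using dimD mk kn by (simp add: card_cart_basis)
  qed
  also have "\<dots> = gb CARD('a) (CARD('n) - m) (k - m)"
    using dimD by (simp add: card_cart_basis)
  finally show ?thesis .
qed

theorem mainTheorem12:
  fixes F :: "('a::{field,finite} ^ 'n) set set"
    and k t x :: nat
  assumes "k > t + 1"
    and "CARD('n) > 2 * k - t"
    and "maximal_t_intersecting k t F"
    and "psi t F = t + x"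
    and "x \<ge> 2"
  shows "\<forall>j \<le> x. \<forall>U :: ('a ^ 'n) set. affine_sub U \<and> adim U = t + x - j \<longrightarrow>
           real (card {A \<in> F. U \<subseteq> A})
             \<le> theta CARD('a) (k - t) ^ j * qbinom CARD('a) (CARD('n) - t - x) (k - t - x)"
proof -
  define q where "q = CARD('a)"
  define n where "n = CARD('n)"
  define th where "th = theta q (k - t)"
  define Q where "Q = qbinom q (n - t - x) (k - t - x)"
  have q2: "2 \<le> q" unfolding q_def by (rule card_field_ge2)
  have thpos: "0 < th" unfolding th_def by (rule theta_pos[OF q2])
  have Fk: "\<forall>A\<in>F. kspace k A" and Fm: "\<forall>A\<in>F. \<forall>B\<in>F. meets_in t A B"
    and Fmax: "\<forall>B. kspace k B \<and> B \<notin> F \<longrightarrow> \<not> (\<forall>A\<in>F. meets_in t A B)"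
    using assms(3) unfolding maximal_t_intersecting_def by blast+
  have kn: "k \<le> n" using assms(1,2) unfolding n_def by linarith
  have nk: "k - t + 1 \<le> n - k" using assms(1,2) unfolding n_def by linarith
  obtain Z :: "('a^'n) set" where Z: "kspace k Z" using kspace_exists[of k] kn unfolding n_def by blast
  have "F \<noteq> {}"
  proof
    assume "F = {}"
    thus False using Fmax Z by blast
  qed
  then obtain A0 where A0: "A0 \<in> F" by blast
  have "psi t F \<le> k"
    unfolding psi_def
  proof (rule Least_le)
    show "\<exists>T. affine_sub T \<and> adim T = k \<and> (\<forall>A\<in>F. meets_in t T A)"
      using A0 Fk Fm unfolding kspace_def by blast
  qed
  hence txk: "t + x \<le> k" using assms(4) by simp
  have Qpos: "0 < Q" unfolding Q_def qbinom_gb using gb_pos[OF q2] txk kn by simp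
  define R where "R = th ^ (t + x) * Q"
  have R: "0 \<le> R" unfolding R_def using thpos Qpos by simp
  have claim: "\<forall>U. affine_sub U \<and> adim U = m \<longrightarrow> real (card {A\<in>F. U \<subseteq> A}) * th ^ m \<le> R" for m
  proof (induction "k + 1 - m" arbitrary: m rule: less_induct)
    case less
    show ?case
    proof (intro allI impI, elim conjE)
      fix U :: "('a^'n) set" assume U: "affine_sub U" and mU: "adim U = m"
      show "real (card {A\<in>F. U \<subseteq> A}) * th ^ m \<le> R"
      proof (cases "k < m")
        case True
        have "{A\<in>F. U \<subseteq> A} = {}"
        proof (rule ccontr)
          assume "{A\<in>F. U \<subseteq> A} \<noteq> {}"
          then obtain A where A: "A \<in> F" "U \<subseteq> A" by blast
          have "affine_sub A" "adim A = k" using A Fk unfolding kspace_def by auto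
          hence "m \<le> k" using adim_le[OF U _ A(2)] mU by simp
          thus False using True by simp
        qed
        then show ?thesis using R by (simp only: card.empty)
      next
        case False
        hence mk: "m \<le> k" by simp
        show ?thesis
        proof (cases "t + x \<le> m")
          case True
          define e where "e = m - (t + x)"
          have b1: "real (card {A\<in>F. U \<subseteq> A}) \<le> gb q (n - m) (k - m)"
            using base_bound[OF Fk U mU mk] kn unfolding q_def n_def by simp
          have "gb q ((n - t - x) - e) ((k - t - x) - e) * th ^ e \<le> gb q (n - t - x) (k - t - x)"
            unfolding th_def
          proof (rule gb_shift[OF q2])
            show "e \<le> k - t - x" unfolding e_def using mk by simp
            show "k - t - x \<le> n - t - x" using kn by simp
            show "k - t + 1 \<le> n - t - x - (k - t - x)" using nk txk kn by simp
          qed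
          moreover have "(n - t - x) - e = n - m" "(k - t - x) - e = k - m"
            unfolding e_def using True mk kn by auto
          ultimately have b2: "gb q (n - m) (k - m) * th ^ e \<le> Q"
            unfolding Q_def qbinom_gb by simp
          have thm': "th ^ m = th ^ e * th ^ (t + x)"
            unfolding e_def using True by (simp add: power_add[symmetric])
          have "real (card {A\<in>F. U \<subseteq> A}) * th ^ e \<le> gb q (n - m) (k - m) * th ^ e"
            using b1 thpos by (intro mult_right_mono) simp_all
          also have "\<dots> \<le> Q" by (rule b2)
          finally have "real (card {A\<in>F. U \<subseteq> A}) * th ^ e * th ^ (t + x) \<le> Q * th ^ (t + x)"
            using thpos by (intro mult_right_mono) simp_all
          thus ?thesis unfolding R_def thm' by (simp add: ac_simps)
        next
          case False
          have "\<not> (\<forall>A\<in>F. meets_in t U A)"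
          proof
            assume all: "\<forall>A\<in>F. meets_in t U A"
            have "psi t F \<le> m"
              unfolding psi_def
              by (rule Least_le) (use U mU all in blast)
            thus False using False assms(4) by simp
          qed
          then obtain B where B: "B \<in> F" and nB: "\<not> meets_in t U B" by blast
          show ?thesis unfolding th_def q_def
          proof (rule step_bound[OF Fk Fm U mU B nB _ R])
            fix V :: "('a^'n) set" and g :: nat
            assume V: "affine_sub V" "adim V = m + g" and g: "1 \<le> g"
            have "k + 1 - (m + g) < k + 1 - m" using g mk by simp
            hence "\<forall>U. affine_sub U \<and> adim U = m + g \<longrightarrow> real (card {A\<in>F. U \<subseteq> A}) * th ^ (m + g) \<le> R"
              by (rule less.hyps)
            thus "real (card {A\<in>F. V \<subseteq> A}) * theta CARD('a) (k - t) ^ (m + g) \<le> R"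
              using V unfolding th_def q_def by blast
          qed
        qed
      qed
    qed
  qed
  show ?thesis
  proof (intro allI impI, elim conjE)
    fix j :: nat and U :: "('a^'n) set"
    assume j: "j \<le> x" and U: "affine_sub U" and mU: "adim U = t + x - j"
    have c: "real (card {A\<in>F. U \<subseteq> A}) * th ^ (t + x - j) \<le> th ^ (t + x - j) * (th ^ j * Q)"
    proof -
      have "th ^ (t + x) = th ^ (t + x - j) * th ^ j" using j by (simp add: power_add[symmetric])
      thus ?thesis using claim[of "t + x - j"] U mU unfolding R_def by (simp add: mult.assoc)
    qed
    have "0 < th ^ (t + x - j)" using thpos by simp
    hence "real (card {A\<in>F. U \<subseteq> A}) \<le> th ^ j * Q"
      using c by (simp add: mult.commute[of _ "th ^ (t + x - j)"] mult_le_cancel_left_pos)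
    thus "real (card {A\<in>F. U \<subseteq> A}) \<le> theta CARD('a) (k - t) ^ j * qbinom CARD('a) (CARD('n) - t - x) (k - t - x)"
      unfolding th_def Q_def q_def n_def .
  qed
qed


end
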